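(* Let $X_t$ be a real random variable with finite second moment and a differentiable density $f_X$, and suppose the limits $\lim_{x\to+\infty} f_X(x)$ and $\lim_{x\to-\infty} f_X(x)$ exist. Define $$\omega_X(x) := \frac{\operatorname{Cov}[\mathbb{1}[X_t \ge x],\, X_t]}{\operatorname{Var}[X_t]}, \qquad x\in\mathbb{R}.$$ Then the following two statements are equivalent: (i) $X_t$ follows a Normal distribution; (ii) $\omega_X(x) = f_X(x)$ for all $x \in \mathbb{R}$.
   Context: $\mathbb{1}[\cdot]$ denotes the indicator function. *)

theory Defs
  imports "HOL-Probability.Probability"
begin

definition covariance :: "'a measure \<Rightarrow> ('a \<Rightarrow> real) \<Rightarrow> ('a \<Rightarrow> real) \<Rightarrow> real" where
  "covariance M X Y =
     (\<integral>w. (X w - (\<integral>v. X v \<partial>M)) * (Y w - (\<integral>v. Y v \<partial>M)) \<partial>M)"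

definition var :: "'a measure \<Rightarrow> ('a \<Rightarrow> real) \<Rightarrow> real" where
  "var M X = (\<integral>w. (X w - (\<integral>v. X v \<partial>M))\<^sup>2 \<partial>M)"

definition omega :: "'a measure \<Rightarrow> ('a \<Rightarrow> real) \<Rightarrow> real \<Rightarrow> real" where
  "omega M X x = covariance M (\<lambda>w. indicator {x..} (X w)) X / var M X"

end

theory Submission
  imports Defs "HOL-Real_Asymp.Real_Asymp"
begin

lemma tail_facts:
  fixes g :: "real \<Rightarrow> real"
  assumes cont: "continuous_on UNIV g" and int: "integrable lborel g"
  shows "((\<lambda>x. LINT t:{x..}|lborel. g t) has_real_derivative (- g x)) (at x)"
    and "((\<lambda>x. LINT t:{x..}|lborel. g t) \<longlongrightarrow> 0) at_top"
proof -
  have si: "set_integrable lborel S g" if "S \<in> sets borel" for S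
    using int that unfolding set_integrable_def by (intro integrable_mult_indicator) auto
  have G: "(LINT t:S|lborel. g t) = integral S g" if "S \<in> sets borel" for S
    using set_borel_integral_eq_integral(2)[OF si[OF that]] .
  have gi: "g integrable_on S" if "S \<in> sets borel" for S
    using set_borel_integral_eq_integral(1)[OF si[OF that]] .
  have split: "integral {y..} g = integral {y..b} g + integral {b..} g" if "y \<le> b" for y b
  proof -
    have "(g has_integral (integral {y..b} g + integral {b..} g)) ({y..b} \<union> {b..})"
    proof (rule has_integral_Un)
      show "(g has_integral integral {y..b} g) {y..b}" using gi[of "{y..b}"] by auto
      show "(g has_integral integral {b..} g) {b..}" using gi[of "{b..}"] by auto
      have "{y..b} \<inter> {b..} = {b}" using that by auto
      then show "negligible ({y..b} \<inter> {b..})" by simp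
    qed
    moreover have "{y..b} \<union> {b..} = {y..}" using that by auto
    ultimately show ?thesis by (simp add: integral_unique)
  qed
  define a where "a = x - 1"
  define b where "b = x + 1"
  have "((\<lambda>y. integral {y..b} g) has_real_derivative -g x) (at x within {a..b})"
    by (rule integral_has_real_derivative') (auto intro: continuous_on_subset[OF cont] simp: a_def b_def)
  moreover have "at x within {a..b} = at x"
    by (rule at_within_interior) (auto simp: a_def b_def)
  ultimately have "((\<lambda>y. integral {y..b} g) has_real_derivative -g x) (at x)" by simp
  then have "((\<lambda>y. integral {y..b} g + integral {b..} g) has_real_derivative -g x + 0) (at x)"
    by (intro DERIV_add DERIV_const)
  then have "((\<lambda>y. integral {y..b} g + integral {b..} g) has_real_derivative -g x) (at x)" by simp
  then show "((\<lambda>x. LINT t:{x..}|lborel. g t) has_real_derivative (- g x)) (at x)"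
  proof (rule has_field_derivative_transform_within_open[where S="{a<..<b}"])
    fix y assume "y \<in> {a<..<b}"
    then show "integral {y..b} g + integral {b..} g = (LINT t:{y..}|lborel. g t)"
      using split[of y b] G[of "{y..}"] by auto
  qed (auto simp: a_def b_def)
next
  have si: "set_integrable lborel S g" if "S \<in> sets borel" for S
    using int that unfolding set_integrable_def by (intro integrable_mult_indicator) auto
  have lim: "((\<lambda>y. LINT t:{0..y}|lborel. g t) \<longlongrightarrow> (LINT t:{0..}|lborel. g t)) at_top"
    by (rule tendsto_set_lebesgue_integral_at_top) (auto intro: si)
  have eq: "(LINT t:{y..}|lborel. g t) = (LINT t:{0..}|lborel. g t) - (LINT t:{0..y}|lborel. g t)"
    if "y \<ge> 0" for y :: real
  proof -
    have G: "(LINT t:S|lborel. g t) = integral S g" if "S \<in> sets borel" for S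
      using set_borel_integral_eq_integral(2)[OF si[OF that]] .
    have gi: "g integrable_on S" if "S \<in> sets borel" for S
      using set_borel_integral_eq_integral(1)[OF si[OF that]] .
    have "(g has_integral (integral {0..y} g + integral {y..} g)) ({0..y} \<union> {y..})"
    proof (rule has_integral_Un)
      show "(g has_integral integral {0..y} g) {0..y}" using gi[of "{0..y}"] by auto
      show "(g has_integral integral {y..} g) {y..}" using gi[of "{y..}"] by auto
      have "{0..y} \<inter> {y..} = {y}" using that by auto
      then show "negligible ({0..y} \<inter> {y..})" by simp
    qed
    moreover have "{0..y} \<union> {y..} = {0::real..}" using that by auto
    ultimately have "integral {0..} g = integral {0..y} g + integral {y..} g" by (simp add: integral_unique)
    then show ?thesis using G[of "{0..}"] G[of "{0..y}"] G[of "{y..}"] by simp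
  qed
  have "((\<lambda>y. (LINT t:{0..}|lborel. g t) - (LINT t:{0..y}|lborel. g t)) \<longlongrightarrow>
      (LINT t:{0..}|lborel. g t) - (LINT t:{0..}|lborel. g t)) at_top"
    by (intro tendsto_intros lim)
  then have "((\<lambda>y. (LINT t:{0..}|lborel. g t) - (LINT t:{0..y}|lborel. g t)) \<longlongrightarrow> 0) at_top" by simp
  then show "((\<lambda>x. LINT t:{x..}|lborel. g t) \<longlongrightarrow> 0) at_top"
  proof (rule Lim_transform_eventually)
    show "\<forall>\<^sub>F y in at_top. (LINT t:{0..}|lborel. g t) - (LINT t:{0..y}|lborel. g t) = (LINT t:{y..}|lborel. g t)"
      by (rule eventually_at_top_linorderI[of 0]) (rule eq[symmetric], assumption)
  qed
qed


lemma normal_deriv: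
  assumes "\<sigma> > 0"
  shows "(normal_density \<mu> \<sigma> has_real_derivative (-(x-\<mu>)/\<sigma>\<^sup>2 * normal_density \<mu> \<sigma> x)) (at x)"
proof -
  have "((\<lambda>x. 1 / sqrt (2 * pi * \<sigma>\<^sup>2) * exp (-(x - \<mu>)\<^sup>2/ (2 * \<sigma>\<^sup>2))) has_real_derivative
     (1 / sqrt (2 * pi * \<sigma>\<^sup>2) * (exp (-(x - \<mu>)\<^sup>2/ (2 * \<sigma>\<^sup>2)) * (- (2 * (x - \<mu>)) / (2 * \<sigma>\<^sup>2))))) (at x)"
  proof (intro DERIV_cmult DERIV_fun_exp DERIV_cdivide)
    have "((\<lambda>x. (x - \<mu>) * (x - \<mu>)) has_real_derivative ((1 - 0) * (x - \<mu>) + (1 - 0) * (x - \<mu>))) (at x)"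
      by (intro DERIV_mult DERIV_diff DERIV_ident DERIV_const)
    then have "((\<lambda>x. - ((x - \<mu>) * (x - \<mu>))) has_real_derivative - ((1 - 0) * (x - \<mu>) + (1 - 0) * (x - \<mu>))) (at x)"
      by (rule DERIV_minus)
    then show "((\<lambda>x. - (x - \<mu>)\<^sup>2) has_real_derivative - (2 * (x - \<mu>))) (at x)"
      by (simp add: power2_eq_square algebra_simps)
  qed
  then show ?thesis unfolding normal_density_def
    by (rule DERIV_cong) (use assms in \<open>simp add: field_simps\<close>)
qed

lemma normal_lim:
  assumes "\<sigma> > 0"
  shows "(normal_density \<mu> \<sigma> \<longlongrightarrow> 0) at_top"
  unfolding normal_density_def using assms by real_asymp


theorem lemma2:
  fixes M :: "'a measure" and X :: "'a \<Rightarrow> real" and f :: "real \<Rightarrow> real"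
  assumes "prob_space M"
    and "X \<in> borel_measurable M"
    and "integrable M (\<lambda>w. (X w)\<^sup>2)"
    and "\<And>x. f x \<ge> 0"
    and "distributed M lborel X (\<lambda>x. ennreal (f x))"
    and "\<And>x. f differentiable (at x)"
    and "\<exists>L. (f \<longlongrightarrow> L) at_top"
    and "\<exists>L. (f \<longlongrightarrow> L) at_bot"
  shows "(\<exists>\<mu> \<sigma>. \<sigma> > 0 \<and> distributed M lborel X (\<lambda>x. ennreal (normal_density \<mu> \<sigma> x)))
         \<longleftrightarrow> (\<forall>x. omega M X x = f x)"
proof -
  interpret P: prob_space M by fact
  note D = assms(5)
  note Xm[measurable] = assms(2)
  have fcont: "continuous_on UNIV f"
    using assms(6) by (meson continuous_at_imp_continuous_on differentiable_imp_continuous_within)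
  have intX: "integrable M X"
    using P.square_integrable_imp_integrable[OF assms(2) assms(3)] .
  define m where "m = (\<integral>w. X w \<partial>M)"
  define V where "V = var M X"
  have intXm: "integrable M (\<lambda>w. X w - m)" using intX by simp
  have EXm: "(\<integral>w. X w - m \<partial>M) = 0"
    using intX by (simp add: m_def P.prob_space)
  have intg: "integrable lborel (\<lambda>t. h t * (t - m))"
    if Dh: "distributed M lborel X (\<lambda>x. ennreal (h x))" and hnn: "\<And>x. h x \<ge> 0" for h
  proof -
    have "integrable lborel (\<lambda>t. h t * (t - m)) \<longleftrightarrow> integrable M (\<lambda>w. X w - m)"
      by (rule distributed_integrable[OF Dh]) (auto simp: hnn)
    then show ?thesis using intXm by simp
  qed
  have cov: "covariance M (\<lambda>w. indicator {x..} (X w)) X = (LINT t:{x..}|lborel. h t * (t - m))"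
    if Dh: "distributed M lborel X (\<lambda>x. ennreal (h x))" and hnn: "\<And>x. h x \<ge> 0" for h x
  proof -
    define p where "p = (\<integral>w. indicator {x..} (X w) \<partial>M :: real)"
    have i1: "integrable M (\<lambda>w. indicator {x..} (X w) * (X w - m) :: real)"
      by (rule Bochner_Integration.integrable_bound[OF intXm]) (auto split: split_indicator)
    have "covariance M (\<lambda>w. indicator {x..} (X w)) X
        = (\<integral>w. indicator {x..} (X w) * (X w - m) - p * (X w - m) \<partial>M)"
      unfolding covariance_def p_def m_def by (intro Bochner_Integration.integral_cong) (auto simp: algebra_simps)
    also have "\<dots> = (\<integral>w. indicator {x..} (X w) * (X w - m) \<partial>M) - p * (\<integral>w. X w - m \<partial>M)"
      using i1 intXm by simp
    also have "\<dots> = (\<integral>w. indicator {x..} (X w) * (X w - m) \<partial>M)" using EXm by simp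
    also have "\<dots> = (\<integral>t. h t * (indicator {x..} t * (t - m)) \<partial>lborel)"
      by (rule distributed_integral[OF Dh, symmetric]) (auto simp: hnn)
    also have "\<dots> = (LINT t:{x..}|lborel. h t * (t - m))"
      unfolding set_lebesgue_integral_def by (intro Bochner_Integration.integral_cong) auto
    finally show ?thesis .
  qed
  have deriv: "((\<lambda>x. LINT t:{x..}|lborel. h t * (t - m)) has_real_derivative - (h x * (x - m))) (at x)"
    if Dh: "distributed M lborel X (\<lambda>x. ennreal (h x))" and hnn: "\<And>x. h x \<ge> 0"
      and hc: "continuous_on UNIV h" for h x
    by (rule tail_facts(1)) (auto intro!: continuous_intros hc intg[OF Dh hnn])
  define G where "G x = (LINT t:{x..}|lborel. f t * (t - m))" for x
  have om: "omega M X x = G x / V" for x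
    unfolding omega_def G_def V_def using cov[OF D assms(4)] by simp
  have dG: "(G has_real_derivative - (f x * (x - m))) (at x)" for x
    unfolding G_def by (rule deriv[OF D assms(4) fcont])
  have Vnn: "V \<ge> 0" unfolding V_def var_def by simp
  show ?thesis
  proof
    assume "\<exists>\<mu> \<sigma>. \<sigma> > 0 \<and> distributed M lborel X (\<lambda>x. ennreal (normal_density \<mu> \<sigma> x))"
    then obtain \<mu> \<sigma> where sp: "\<sigma> > 0" and Dn: "distributed M lborel X (\<lambda>x. ennreal (normal_density \<mu> \<sigma> x))"
      by blast
    have Dn': "distributed M lborel X (normal_density \<mu> \<sigma>)" using Dn by simp
    have mu: "m = \<mu>" unfolding m_def using P.normal_distributed_expectation[OF sp Dn'] by simp
    have Vs: "V = \<sigma>\<^sup>2" unfolding V_def var_def using P.normal_distributed_variance[OF sp Dn'] by simp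
    have ncont: "continuous_on UNIV (normal_density \<mu> \<sigma>)"
      using normal_deriv[OF sp] by (meson DERIV_continuous continuous_at_imp_continuous_on)
    have Geq: "G = (\<lambda>x. LINT t:{x..}|lborel. normal_density \<mu> \<sigma> t * (t - m))"
      unfolding G_def using cov[OF D assms(4)] cov[OF Dn] by (auto simp: fun_eq_iff)
    have dGn: "(G has_real_derivative - (normal_density \<mu> \<sigma> x * (x - m))) (at x)" for x
      unfolding Geq by (rule deriv[OF Dn normal_density_nonneg ncont])
    have eq1: "f x = normal_density \<mu> \<sigma> x" if "x \<noteq> m" for x
      using DERIV_unique[OF dG dGn, of x] that by simp
    have fn: "f = normal_density \<mu> \<sigma>"
    proof
      fix x
      show "f x = normal_density \<mu> \<sigma> x"
      proof (cases "x = m")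
        case False then show ?thesis by (rule eq1)
      next
        case True
        have l1: "(f \<longlongrightarrow> f x) (at x)" using fcont by (simp add: continuous_on_def)
        have "\<forall>\<^sub>F y in at x. f y = normal_density \<mu> \<sigma> y"
          unfolding eventually_at_filter using True eq1 by auto
        with l1 have "(normal_density \<mu> \<sigma> \<longlongrightarrow> f x) (at x)" by (rule Lim_transform_eventually)
        moreover have "(normal_density \<mu> \<sigma> \<longlongrightarrow> normal_density \<mu> \<sigma> x) (at x)"
          using ncont by (simp add: continuous_on_def)
        ultimately show ?thesis using tendsto_unique by (metis at_neq_bot)
      qed
    qed
    define H where "H x = G x - \<sigma>\<^sup>2 * normal_density \<mu> \<sigma> x" for x
    have dH: "(H has_real_derivative 0) (at x)" for x
    proof -
      have "(H has_real_derivative (- (normal_density \<mu> \<sigma> x * (x - m)) - \<sigma>\<^sup>2 * (-(x-\<mu>)/\<sigma>\<^sup>2 * normal_density \<mu> \<sigma> x))) (at x)"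
        unfolding H_def by (intro DERIV_diff dGn DERIV_cmult normal_deriv sp)
      then show ?thesis using sp mu by (simp add: field_simps)
    qed
    have Hc: "H x = H 0" for x using dH DERIV_isconst_all by blast
    have "(H \<longlongrightarrow> 0 - \<sigma>\<^sup>2 * 0) at_top"
      unfolding H_def Geq
      by (intro tendsto_intros normal_lim sp tail_facts(2))
         (auto intro!: continuous_intros ncont intg[OF Dn normal_density_nonneg])
    then have "(H \<longlongrightarrow> 0) at_top" by simp
    moreover have "\<forall>\<^sub>F x in at_top. H x = H 0" by (intro always_eventually allI Hc)
    ultimately have "((\<lambda>_::real. H 0) \<longlongrightarrow> 0) at_top"
      by (rule Lim_transform_eventually)
    then have "H 0 = 0" by (simp add: tendsto_const_iff)
    then have "G x = \<sigma>\<^sup>2 * normal_density \<mu> \<sigma> x" for x using Hc[of x] by (simp add: H_def)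
    then show "\<forall>x. omega M X x = f x" using sp by (simp add: om Vs fn)
  next
    assume A: "\<forall>x. omega M X x = f x"
    have fG: "f x = G x / V" for x using A om by simp
    have Vpos: "V > 0"
    proof (rule ccontr)
      assume "\<not> V > 0"
      then have "V = 0" using Vnn by simp
      then have f0: "f x = 0" for x using fG by simp
      have "emeasure lborel {x \<in> space lborel. ennreal (f x) \<noteq> 0} \<noteq> 0"
        by (rule P.distributed_imp_emeasure_nonzero[OF D])
      then show False using f0 by simp
    qed
    have df: "(f has_real_derivative - (f x * (x - m)) / V) (at x)" for x
    proof -
      have "((\<lambda>x. G x / V) has_real_derivative - (f x * (x - m)) / V) (at x)"
        by (rule DERIV_cdivide[OF dG])
      moreover have "(\<lambda>x. G x / V) = f" using fG by (simp add: fun_eq_iff)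
      ultimately show ?thesis by simp
    qed
    define h where "h x = f x * exp ((x - m)\<^sup>2 / (2 * V))" for x
    have dh: "(h has_real_derivative 0) (at x)" for x
    proof -
      have d2: "((\<lambda>x. (x - m)\<^sup>2 / (2 * V)) has_real_derivative (2 * (x - m)) / (2 * V)) (at x)"
      proof (rule DERIV_cdivide)
        have "((\<lambda>x. (x - m) * (x - m)) has_real_derivative ((1 - 0) * (x - m) + (1 - 0) * (x - m))) (at x)"
          by (intro DERIV_mult DERIV_diff DERIV_ident DERIV_const)
        then show "((\<lambda>x. (x - m)\<^sup>2) has_real_derivative 2 * (x - m)) (at x)"
          by (simp add: power2_eq_square algebra_simps)
      qed
      have "(h has_real_derivative (- (f x * (x - m)) / V) * exp ((x - m)\<^sup>2 / (2 * V))
           + (exp ((x - m)\<^sup>2 / (2 * V)) * ((2 * (x - m)) / (2 * V))) * f x) (at x)"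
        unfolding h_def by (intro DERIV_mult df DERIV_fun_exp d2)
      then show ?thesis using Vpos by (simp add: field_simps)
    qed
    define c where "c = h m"
    have hc: "h x = c" for x unfolding c_def using dh DERIV_isconst_all by blast
    define \<sigma> where "\<sigma> = sqrt V"
    have sp: "\<sigma> > 0" using Vpos by (simp add: \<sigma>_def)
    have s2: "\<sigma>\<^sup>2 = V" using Vpos by (simp add: \<sigma>_def)
    define k where "k = c * sqrt (2 * pi * V)"
    have fk: "f x = k * normal_density m \<sigma> x" for x
    proof -
      have "f x = c * exp (- (x - m)\<^sup>2 / (2 * V))"
        using hc[of x] unfolding h_def by (simp add: exp_minus field_simps)
      then show ?thesis unfolding normal_density_def s2 k_def using Vpos by simp
    qed
    have "(\<integral>x. f x * 1 \<partial>lborel) = (\<integral>w. 1 \<partial>M)"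
      by (rule distributed_integral[OF D]) (auto simp: assms(4))
    then have "(\<integral>x. k * normal_density m \<sigma> x \<partial>lborel) = 1"
      using fk by (simp add: P.prob_space)
    then have "k = 1" using sp by simp
    then have "f = normal_density m \<sigma>" using fk by (simp add: fun_eq_iff)
    then show "\<exists>\<mu> \<sigma>. \<sigma> > 0 \<and> distributed M lborel X (\<lambda>x. ennreal (normal_density \<mu> \<sigma> x))"
      using D sp by blast
  qed
qed

end
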